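(* Let $\mathcal P=(R_1,R_2,\ldots,R_k)$ be distinct rows of a binary matrix such that the overlap graph of $\{R_1,\ldots,R_k\}$ is the path $R_1-R_2-\cdots-R_k$ (i.e., $R_i$ and $R_j$ overlap if and only if $|i-j|=1$), the set $\{R_1,\ldots,R_k\}$ has the consecutive-ones property, and let $Z$ be a further row such that $\{R_1,\ldots,R_k,Z\}$ does not have the consecutive-ones property. Assume that every Tucker submatrix of the matrix with rows $\{R_1,\ldots,R_k,Z\}$ has at least five rows. Let $j$ be the least index such that $\{R_1,\ldots,R_j,Z\}$ does not have the consecutive-ones property, and then let $i\le j$ be the greatest index such that $\{R_i,R_{i+1},\ldots,R_j,Z\}$ does not have the consecutive-ones property. Then $\{R_i,\ldots,R_j,Z\}$ is a minimal set of rows without the consecutive-ones property: it does not have the consecutive-ones property, but every proper subset of it does.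
   Context: Each row is identified with the set of columns in which it has a 1. A set of rows has the consecutive-ones property if there is an ordering of all columns such that in each of these rows the 1's are consecutive. Two rows overlap if they intersect and neither is a subset of the other; the overlap graph of a set of rows has an edge between each pair of overlapping rows. A Tucker submatrix is a submatrix (subset of rows and columns) without the consecutive-ones property such that deleting any single row or column yields a matrix with the consecutive-ones property. *)

theory Defs
  imports Main
begin

text \<open>Rows are identified with the sets of columns in which they have a 1.
  U is the (finite) set of all columns of the matrix.\<close>

definition C1P :: "'c set \<Rightarrow> 'c set set \<Rightarrow> bool" where
  "C1P U A \<longleftrightarrow> (\<exists>f :: 'c \<Rightarrow> nat. inj_on f U \<and>
     (\<forall>X\<in>A. \<forall>x\<in>X. \<forall>y\<in>X. \<forall>c\<in>U. f x \<le> f c \<and> f c \<le> f y \<longrightarrow> c \<in> X))"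

definition overlap :: "'c set \<Rightarrow> 'c set \<Rightarrow> bool" where
  "overlap A B \<longleftrightarrow> A \<inter> B \<noteq> {} \<and> \<not> A \<subseteq> B \<and> \<not> B \<subseteq> A"

definition sub_C1P :: "'c set set \<Rightarrow> 'c set \<Rightarrow> bool" where
  "sub_C1P S C \<longleftrightarrow> C1P C ((\<lambda>X. X \<inter> C) ` S)"

definition tucker_sub :: "'c set \<Rightarrow> 'c set set \<Rightarrow> 'c set set \<Rightarrow> 'c set \<Rightarrow> bool" where
  "tucker_sub U M S C \<longleftrightarrow> S \<subseteq> M \<and> C \<subseteq> U \<and> \<not> sub_C1P S C \<and>
     (\<forall>X\<in>S. sub_C1P (S - {X}) C) \<and> (\<forall>c\<in>C. sub_C1P S (C - {c}))"

end

theory Submission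
  imports Defs "HOL-Library.Product_Lexorder"
begin


definition iv :: "('c \<Rightarrow> 'b::linorder) \<Rightarrow> 'c set \<Rightarrow> 'c set \<Rightarrow> bool" where
  "iv f V X \<longleftrightarrow> (\<forall>x\<in>X. \<forall>y\<in>X. \<forall>c\<in>V. f x \<le> f c \<and> f c \<le> f y \<longrightarrow> c \<in> X)"

lemma iv_mono: "iv f V X \<Longrightarrow> V' \<subseteq> V \<Longrightarrow> iv f V' X"
  unfolding iv_def by blast

lemma iv_neg: "iv (\<lambda>c. - (f c :: int)) V X \<longleftrightarrow> iv f V X"
  unfolding iv_def by auto

lemma inj_neg: "inj_on (f :: 'c \<Rightarrow> int) U \<Longrightarrow> inj_on (\<lambda>c. - f c) U"
  unfolding inj_on_def by auto

lemma C1P_int: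
  assumes "C1P U A"
  shows "\<exists>g::'c\<Rightarrow>int. inj_on g U \<and> (\<forall>X\<in>A. iv g U X)"
proof -
  obtain f :: "'c \<Rightarrow> nat" where f0: "inj_on f U \<and>
    (\<forall>X\<in>A. \<forall>x\<in>X. \<forall>y\<in>X. \<forall>c\<in>U. f x \<le> f c \<and> f c \<le> f y \<longrightarrow> c \<in> X)"
    using assms unfolding C1P_def by (rule exE)
  note f = conjunct1[OF f0] conjunct2[OF f0]
  have "inj_on (\<lambda>c. int (f c)) U" using f(1) unfolding inj_on_def by simp
  moreover have "\<forall>X\<in>A. iv (\<lambda>c. int (f c)) U X" using f(2) unfolding iv_def of_nat_le_iff by assumption
  ultimately show ?thesis by (intro exI[of _ "\<lambda>c. int (f c)"] conjI)
qed

lemma C1P_I: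
  fixes f :: "'c \<Rightarrow> 'b::linorder"
  assumes U: "finite U" and inj: "inj_on f U" and iv: "\<forall>X\<in>A. iv f U X" and sub: "\<forall>X\<in>A. X \<subseteq> U"
  shows "C1P U A"
proof -
  define r where "r c = card {d\<in>U. f d < f c}" for c
  have lt: "r c < r d" if "c \<in> U" "d \<in> U" "f c < f d" for c d
  proof -
    have "{e\<in>U. f e < f c} \<subset> {e\<in>U. f e < f d}" using that by auto
    then show ?thesis unfolding r_def using U by (intro psubset_card_mono) auto
  qed
  have le: "f c \<le> f d \<longleftrightarrow> r c \<le> r d" if "c \<in> U" "d \<in> U" for c d
  proof (cases "f c < f d")
    case True then show ?thesis using lt[OF that] by simp
  next
    case False
    show ?thesis
    proof (cases "f d < f c")
      case True then show ?thesis using lt[OF that(2,1)] by simp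
    next
      case False
      then have "f c = f d" using \<open>\<not> f c < f d\<close> by simp
      then show ?thesis by (simp add: r_def)
    qed
  qed
  have I1: "inj_on r U"
  proof (rule inj_onI)
    fix c d assume cd: "c \<in> U" "d \<in> U" "r c = r d"
    have "f c = f d"
    proof (rule ccontr)
      assume "f c \<noteq> f d"
      then have "f c < f d \<or> f d < f c" by auto
      then show False using lt[OF cd(1,2)] lt[OF cd(2,1)] cd(3) by auto
    qed
    then show "c = d" using inj cd unfolding inj_on_def by blast
  qed
  have I2: "\<forall>X\<in>A. \<forall>x\<in>X. \<forall>y\<in>X. \<forall>c\<in>U. r x \<le> r c \<and> r c \<le> r y \<longrightarrow> c \<in> X"
  proof (intro ballI impI)
    fix X x y c assume H: "X \<in> A" "x \<in> X" "y \<in> X" "c \<in> U" "r x \<le> r c \<and> r c \<le> r y"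
    moreover have "x \<in> U" "y \<in> U" using sub H by auto
    ultimately have "f x \<le> f c" "f c \<le> f y" using le by auto
    then show "c \<in> X" using iv H unfolding iv_def by blast
  qed
  show ?thesis unfolding C1P_def by (rule exI[of _ r], rule conjI[OF I1 I2])
qed

lemma C1P_mono: assumes "C1P U A" "B \<subseteq> A" shows "C1P U B"
proof -
  obtain f :: "'a \<Rightarrow> nat" where f0: "inj_on f U \<and>
    (\<forall>X\<in>A. \<forall>x\<in>X. \<forall>y\<in>X. \<forall>c\<in>U. f x \<le> f c \<and> f c \<le> f y \<longrightarrow> c \<in> X)"
    using assms(1) unfolding C1P_def by (rule exE)
  note f = conjunct1[OF f0] conjunct2[OF f0]
  have "\<forall>X\<in>B. \<forall>x\<in>X. \<forall>y\<in>X. \<forall>c\<in>U. f x \<le> f c \<and> f c \<le> f y \<longrightarrow> c \<in> X"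
    using f(2) assms(2) by blast
  then show ?thesis unfolding C1P_def using f(1) by (intro exI[of _ f] conjI)
qed

definition ins :: "('c \<Rightarrow> int) \<Rightarrow> 'c set \<Rightarrow> int \<Rightarrow> ('c \<Rightarrow> 'b::linorder) \<Rightarrow> 'b \<Rightarrow> 'c \<Rightarrow> int \<times> 'b" where
  "ins g W p h d c = (if c \<in> W then (p, h c) else (2 * g c, d))"

lemma odd_ne: "odd (p::int) \<Longrightarrow> 2 * a \<noteq> p"
  by auto

lemma prod_le_fst: "(a, b) \<le> (a', b') \<Longrightarrow> a \<le> (a'::int)"
  by (auto simp: less_eq_prod_simp)

lemma ins_inj:
  assumes "inj_on g U" "inj_on h W" "odd p"
  shows "inj_on (ins g W p h d) U"
proof (rule inj_onI)
  fix x y assume xy: "x \<in> U" "y \<in> U" "ins g W p h d x = ins g W p h d y"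
  show "x = y"
  proof (cases "x \<in> W")
    case True
    show ?thesis
    proof (cases "y \<in> W")
      case True
      then have "h x = h y" using xy \<open>x \<in> W\<close> by (simp add: ins_def)
      then show ?thesis using assms(2) True \<open>x \<in> W\<close> unfolding inj_on_def by blast
    next
      case False
      then have "p = 2 * g y" using xy \<open>x \<in> W\<close> by (simp add: ins_def)
      then show ?thesis using odd_ne[OF assms(3)] by metis
    qed
  next
    case False
    show ?thesis
    proof (cases "y \<in> W")
      case True
      then have "p = 2 * g x" using xy \<open>x \<notin> W\<close> by (simp add: ins_def)
      then show ?thesis using odd_ne[OF assms(3)] by metis
    next
      case False
      then have "g x = g y" using xy \<open>x \<notin> W\<close> by (simp add: ins_def)
      then show ?thesis using assms(1) xy unfolding inj_on_def by blast
    qed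
  qed
qed

lemma ins_I1:
  assumes "X \<inter> W = {}" "iv g (U - W) X" "odd p"
    "\<not> (\<exists>x\<in>X. \<exists>y\<in>X. 2 * g x < p \<and> p < 2 * g y)"
  shows "iv (ins g W p h d) U X"
  unfolding iv_def
proof (intro ballI impI)
  fix x y c assume H: "x \<in> X" "y \<in> X" "c \<in> U" "ins g W p h d x \<le> ins g W p h d c \<and> ins g W p h d c \<le> ins g W p h d y"
  have xW: "x \<notin> W" "y \<notin> W" using assms(1) H by auto
  show "c \<in> X"
  proof (cases "c \<in> W")
    case True
    then have "2 * g x \<le> p" "p \<le> 2 * g y" using H xW by (auto simp: ins_def dest: prod_le_fst)
    then have "2 * g x < p" "p < 2 * g y" using odd_ne[OF assms(3)] by (metis order_le_less)+
    then show ?thesis using assms(4) H by blast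
  next
    case False
    then have "2 * g x \<le> 2 * g c" "2 * g c \<le> 2 * g y" using H xW by (auto simp: ins_def dest: prod_le_fst)
    then have "g x \<le> g c" "g c \<le> g y" by auto
    then show ?thesis using assms(2) H False unfolding iv_def by blast
  qed
qed

lemma ins_I2:
  assumes "X \<subseteq> W" "iv h W X" "odd p"
  shows "iv (ins g W p h d) U X"
  unfolding iv_def
proof (intro ballI impI)
  fix x y c assume H: "x \<in> X" "y \<in> X" "c \<in> U" "ins g W p h d x \<le> ins g W p h d c \<and> ins g W p h d c \<le> ins g W p h d y"
  have xW: "x \<in> W" "y \<in> W" using assms(1) H by auto
  show "c \<in> X"
  proof (cases "c \<in> W")
    case True
    then have "h x \<le> h c" "h c \<le> h y" using H xW by (auto simp: ins_def)
    then show ?thesis using assms(2) H True unfolding iv_def by blast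
  next
    case False
    then have "p \<le> 2 * g c" "2 * g c \<le> p" using H xW by (auto simp: ins_def dest: prod_le_fst)
    then have "p = 2 * g c" by simp
    then show ?thesis using odd_ne[OF assms(3)] by metis
  qed
qed

lemma ins_I3:
  assumes "W \<subseteq> X" "X \<subseteq> U" "inj_on g U" "odd p" "iv g (U - W) X"
    "\<forall>x\<in>X - W. \<forall>c\<in>U - W - X. \<not> (g x < g c \<and> 2 * g c < p) \<and> \<not> (p < 2 * g c \<and> g c < g x)"
  shows "iv (ins g W p h d) U X"
  unfolding iv_def
proof (intro ballI impI)
  fix x y c assume H: "x \<in> X" "y \<in> X" "c \<in> U" "ins g W p h d x \<le> ins g W p h d c \<and> ins g W p h d c \<le> ins g W p h d y"
  show "c \<in> X"
  proof (rule ccontr)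
    assume cX: "c \<notin> X"
    then have cW: "c \<notin> W" using assms(1) by blast
    have ne: "2 * g c \<noteq> p" using odd_ne[OF assms(4)] .
    have xy: "x \<in> U" "y \<in> U" using H assms(2) by auto
    show False
    proof (cases "x \<in> W")
      case True
      then have "p \<le> 2 * g c" using H cW by (auto simp: ins_def dest: prod_le_fst)
      then have pc: "p < 2 * g c" using ne by auto
      show False
      proof (cases "y \<in> W")
        case True
        then have "2 * g c \<le> p" using H cW by (auto simp: ins_def dest: prod_le_fst)
        then show False using pc by auto
      next
        case False
        then have "2 * g c \<le> 2 * g y" using H cW by (auto simp: ins_def dest: prod_le_fst)
        then have "g c \<le> g y" by simp
        moreover have "g c \<noteq> g y" using assms(3) xy H cX unfolding inj_on_def by metis
        ultimately have "g c < g y" by simp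
        then show False using assms(6) pc H False cX cW by blast
      qed
    next
      case False
      then have gx: "2 * g x \<le> 2 * g c" using H cW by (auto simp: ins_def dest: prod_le_fst)
      then have "g x \<le> g c" by simp
      moreover have "g c \<noteq> g x" using assms(3) xy H cX unfolding inj_on_def by metis
      ultimately have gxc: "g x < g c" by simp
      show False
      proof (cases "y \<in> W")
        case True
        then have "2 * g c \<le> p" using H cW by (auto simp: ins_def dest: prod_le_fst)
        then have "2 * g c < p" using ne by auto
        then show False using assms(6) gxc H \<open>x \<notin> W\<close> cX cW by blast
      next
        case False
        then have "2 * g c \<le> 2 * g y" using H cW by (auto simp: ins_def dest: prod_le_fst)
        then have "g c \<le> g y" by simp
        then show False using assms(5) H \<open>g x \<le> g c\<close> cX cW unfolding iv_def by blast
      qed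
    qed
  qed
qed

lemma ins_I4:
  assumes "X \<subseteq> U" "inj_on g U" "odd p" "iv g (U - W) X"
    "\<forall>x\<in>X - W. 2 * g x < p"
    "\<forall>x\<in>X - W. \<forall>c\<in>U - W - X. \<not> (g x < g c \<and> 2 * g c < p)"
    "\<forall>w\<in>X \<inter> W. \<forall>w'\<in>W - X. h w < h w'"
  shows "iv (ins g W p h d) U X"
  unfolding iv_def
proof (intro ballI impI)
  fix x y c assume H: "x \<in> X" "y \<in> X" "c \<in> U" "ins g W p h d x \<le> ins g W p h d c \<and> ins g W p h d c \<le> ins g W p h d y"
  show "c \<in> X"
  proof (rule ccontr)
    assume cX: "c \<notin> X"
    have ne: "2 * g c \<noteq> p" using odd_ne[OF assms(3)] .
    have xy: "x \<in> U" "y \<in> U" using H assms(1) by auto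
    show False
    proof (cases "c \<in> W")
      case True
      show False
      proof (cases "y \<in> W")
        case True
        then have "h y < h c" using assms(7) H \<open>c \<in> W\<close> cX by blast
        moreover have "(p, h c) \<le> (p, h y)" using H True \<open>c \<in> W\<close> by (simp add: ins_def)
        ultimately show False by (simp add: less_eq_prod_simp)
      next
        case False
        then have "2 * g y < p" using assms(5) H by blast
        moreover have "p \<le> 2 * g y" using H False \<open>c \<in> W\<close> by (auto simp: ins_def dest: prod_le_fst)
        ultimately show False by simp
      qed
    next
      case cW: False
      show False
      proof (cases "x \<in> W")
        case True
        then have pc: "p \<le> 2 * g c" using H cW by (auto simp: ins_def dest: prod_le_fst)
        show False
        proof (cases "y \<in> W")
          case True
          then have "2 * g c \<le> p" using H cW by (auto simp: ins_def dest: prod_le_fst)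
          then show False using pc ne by auto
        next
          case False
          then have "2 * g c \<le> 2 * g y" using H cW by (auto simp: ins_def dest: prod_le_fst)
          moreover have "2 * g y < p" using assms(5) H False by blast
          ultimately show False using pc by simp
        qed
      next
        case False
        then have "2 * g x \<le> 2 * g c" using H cW by (auto simp: ins_def dest: prod_le_fst)
        then have "g x \<le> g c" by simp
        moreover have "g c \<noteq> g x" using assms(2) xy H cX unfolding inj_on_def by metis
        ultimately have gxc: "g x < g c" by simp
        show False
        proof (cases "y \<in> W")
          case True
          then have "2 * g c \<le> p" using H cW by (auto simp: ins_def dest: prod_le_fst)
          then have "2 * g c < p" using ne by auto
          then show False using assms(6) gxc H \<open>x \<notin> W\<close> cX cW by blast
        next
          case False
          then have "2 * g c \<le> 2 * g y" using H cW by (auto simp: ins_def dest: prod_le_fst)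
          then have "g c \<le> g y" by simp
          then show False using assms(4) H \<open>g x \<le> g c\<close> cX cW unfolding iv_def by blast
        qed
      qed
    qed
  qed
qed


definition conn :: "'c set set \<Rightarrow> bool" where
  "conn F \<longleftrightarrow> (\<forall>S\<subseteq>F. S \<noteq> {} \<longrightarrow> (\<forall>X\<in>S. \<forall>Y\<in>F. overlap X Y \<longrightarrow> Y \<in> S) \<longrightarrow> S = F)"

lemma connD: "conn F \<Longrightarrow> S \<subseteq> F \<Longrightarrow> X0 \<in> S \<Longrightarrow> (\<And>X Y. X \<in> S \<Longrightarrow> Y \<in> F \<Longrightarrow> overlap X Y \<Longrightarrow> Y \<in> S) \<Longrightarrow> S = F"
  unfolding conn_def by blast

lemma overlap_sym: "overlap A B \<longleftrightarrow> overlap B A"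
  unfolding overlap_def by blast

lemma no_overlap_union:
  assumes "conn F" "\<forall>X\<in>F. \<not> overlap Y X"
  shows "\<not> overlap Y (\<Union>F)"
proof
  assume ov: "overlap Y (\<Union>F)"
  then obtain X0 where X0: "X0 \<in> F" "Y \<inter> X0 \<noteq> {}" unfolding overlap_def by blast
  show False
  proof (cases "\<exists>X\<in>F. X \<subseteq> Y")
    case True
    then obtain X1 where X1: "X1 \<in> F" "X1 \<subseteq> Y" by blast
    have "{X\<in>F. X \<subseteq> Y} = F"
    proof (rule connD[OF assms(1), of _ X1])
      fix X Y' assume "X \<in> {X \<in> F. X \<subseteq> Y}" "Y' \<in> F" "overlap X Y'"
      then show "Y' \<in> {X \<in> F. X \<subseteq> Y}" using assms(2) unfolding overlap_def by blast
    qed (use X1 in auto)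
    then have "\<Union>F \<subseteq> Y" by blast
    then show False using ov unfolding overlap_def by blast
  next
    case False
    then have "Y \<subseteq> X0" using assms(2) X0 unfolding overlap_def by blast
    then have "Y \<subseteq> \<Union>F" using X0 by blast
    then show False using ov unfolding overlap_def by blast
  qed
qed

lemma btw_split:
  fixes a b m t :: "'b::linorder"
  assumes "a \<le> t \<and> t \<le> b \<or> b \<le> t \<and> t \<le> a"
  shows "(a \<le> t \<and> t \<le> m \<or> m \<le> t \<and> t \<le> a) \<or> (m \<le> t \<and> t \<le> b \<or> b \<le> t \<and> t \<le> m)"
proof (cases "t \<le> m")
  case True then show ?thesis using assms by blast
next
  case False then have "m \<le> t" by simp
  then show ?thesis using assms by blast
qed

lemma iv_btw: "iv f V X \<Longrightarrow> x \<in> X \<Longrightarrow> y \<in> X \<Longrightarrow> c \<in> V \<Longrightarrow>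
  f x \<le> f c \<and> f c \<le> f y \<or> f y \<le> f c \<and> f c \<le> f x \<Longrightarrow> c \<in> X"
  unfolding iv_def by blast

lemma union_iv:
  fixes f :: "'c \<Rightarrow> 'b::linorder"
  assumes "conn F" "\<forall>X\<in>F. iv f U X"
  shows "iv f U (\<Union>F)"
  unfolding iv_def
proof (intro ballI impI)
  fix x y c assume H: "x \<in> \<Union>F" "y \<in> \<Union>F" "c \<in> U" "f x \<le> f c \<and> f c \<le> f y"
  obtain X0 where X0: "X0 \<in> F" "x \<in> X0" using H by blast
  define P where "P X \<longleftrightarrow> (\<forall>y'\<in>X. \<forall>c\<in>U. (f x \<le> f c \<and> f c \<le> f y' \<or> f y' \<le> f c \<and> f c \<le> f x) \<longrightarrow> c \<in> \<Union>F)" for X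
  define S where "S = {X\<in>F. P X}"
  have "S = F"
  proof (rule connD[OF assms(1), of S X0])
    show "S \<subseteq> F" unfolding S_def by blast
    have "P X0" unfolding P_def
    proof (intro ballI impI)
      fix y' c assume "y' \<in> X0" "c \<in> U" "f x \<le> f c \<and> f c \<le> f y' \<or> f y' \<le> f c \<and> f c \<le> f x"
      then have "c \<in> X0" using iv_btw[of f U X0 x y' c] assms(2) X0 by blast
      then show "c \<in> \<Union>F" using X0 by blast
    qed
    then show "X0 \<in> S" unfolding S_def using X0 by blast
  next
    fix X Y assume XY: "X \<in> S" "Y \<in> F" "overlap X Y"
    then obtain z where z: "z \<in> X" "z \<in> Y" unfolding overlap_def by blast
    have PX: "P X" using XY(1) unfolding S_def by blast
    have "P Y" unfolding P_def
    proof (intro ballI impI)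
      fix y' c assume yc: "y' \<in> Y" "c \<in> U" "f x \<le> f c \<and> f c \<le> f y' \<or> f y' \<le> f c \<and> f c \<le> f x"
      from btw_split[OF yc(3), of "f z"]
      show "c \<in> \<Union>F"
      proof
        assume "f x \<le> f c \<and> f c \<le> f z \<or> f z \<le> f c \<and> f c \<le> f x"
        then show ?thesis using PX z(1) yc(2) unfolding P_def by blast
      next
        assume b: "f z \<le> f c \<and> f c \<le> f y' \<or> f y' \<le> f c \<and> f c \<le> f z"
        have "iv f U Y" using assms(2) XY(2) by blast
        then have "c \<in> Y" using iv_btw[of f U Y z y' c] z yc b by blast
        then show ?thesis using XY(2) by blast
      qed
    qed
    then show "Y \<in> S" unfolding S_def using XY(2) by blast
  qed
  moreover obtain Y0 where Y0: "Y0 \<in> F" "y \<in> Y0" using H by blast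
  ultimately have "P Y0" unfolding S_def by blast
  then show "c \<in> \<Union>F" using H Y0 unfolding P_def by blast
qed



lemma ex_min: fixes f :: "'a \<Rightarrow> 'b::linorder"
  assumes "finite S" "S \<noteq> {}" shows "\<exists>m\<in>S. \<forall>x\<in>S. f m \<le> f x"
  using arg_min_if_finite(1)[OF assms, of f] arg_min_least[OF assms, of _ f] by blast

lemma ex_max: fixes f :: "'a \<Rightarrow> int"
  assumes "finite S" "S \<noteq> {}" shows "\<exists>m\<in>S. \<forall>x\<in>S. f x \<le> f m"
proof -
  obtain m where "m \<in> S" "\<forall>x\<in>S. - f m \<le> - f x" using ex_min[OF assms, of "\<lambda>x. - f x"] by blast
  then show ?thesis by auto
qed

lemma inj_lt:
  fixes g :: "'c \<Rightarrow> int"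
  assumes "inj_on g U" "a \<in> U" "b \<in> U" "a \<noteq> b" "g a \<le> g b"
  shows "g a < g b"
proof -
  have "g a \<noteq> g b" using assms(1-4) unfolding inj_on_def by blast
  then show ?thesis using assms(5) by simp
qed

lemma iv_lt: "iv (g::'c\<Rightarrow>int) U X \<Longrightarrow> x \<in> X \<Longrightarrow> y \<in> X \<Longrightarrow> c \<in> U \<Longrightarrow> g x < g c \<Longrightarrow> g c < g y \<Longrightarrow> c \<in> X"
  unfolding iv_def by (meson less_imp_le)

text \<open>Placing the block right after the minimal element of W.\<close>

lemma gather_disj:
  fixes g :: "'c \<Rightarrow> int"
  assumes inj: "inj_on g U" and wm: "wm \<in> W" "W \<subseteq> U" and X: "X \<subseteq> U" "iv g U X" "X \<inter> W = {}"
  shows "iv (ins g W (2 * g wm + 1) h d) U X"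
proof (rule ins_I1)
  show "iv g (U - W) X" using X(2) iv_mono by blast
  show "odd (2 * g wm + 1)" by simp
  show "X \<inter> W = {}" by fact
  show "\<not> (\<exists>x\<in>X. \<exists>y\<in>X. 2 * g x < 2 * g wm + 1 \<and> 2 * g wm + 1 < 2 * g y)"
  proof
    assume "\<exists>x\<in>X. \<exists>y\<in>X. 2 * g x < 2 * g wm + 1 \<and> 2 * g wm + 1 < 2 * g y"
    then obtain x y where xy: "x \<in> X" "y \<in> X" "g x \<le> g wm" "g wm < g y" by auto
    have "wm \<in> U" using wm by blast
    then have "wm \<in> X" using X(2) xy unfolding iv_def by (meson less_imp_le)
    then show False using X(3) wm by blast
  qed
qed

lemma gather_sup:
  fixes g :: "'c \<Rightarrow> int"
  assumes inj: "inj_on g U" and wm: "wm \<in> W" "W \<subseteq> U" and X: "X \<subseteq> U" "iv g U X" "W \<subseteq> X"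
  shows "iv (ins g W (2 * g wm + 1) h d) U X"
proof (rule ins_I3)
  show "iv g (U - W) X" using X(2) iv_mono by blast
  show "odd (2 * g wm + 1)" by simp
  show "W \<subseteq> X" "X \<subseteq> U" "inj_on g U" by fact+
  have wmX: "wm \<in> X" "wm \<in> U" using wm X by auto
  show "\<forall>x\<in>X - W. \<forall>c\<in>U - W - X. \<not> (g x < g c \<and> 2 * g c < 2 * g wm + 1) \<and> \<not> (2 * g wm + 1 < 2 * g c \<and> g c < g x)"
  proof (intro ballI conjI notI)
    fix x c assume xc: "x \<in> X - W" "c \<in> U - W - X"
    have "c \<noteq> wm" using xc wm by blast
    {
      assume a: "g x < g c \<and> 2 * g c < 2 * g wm + 1"
      then have "g c \<le> g wm" by simp
      then have "g c < g wm" using inj_lt[OF inj, of c wm] xc wmX \<open>c \<noteq> wm\<close> by blast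
      then show False using iv_lt[OF X(2), of x wm c] a xc wmX by blast
    next
      assume a: "2 * g wm + 1 < 2 * g c \<and> g c < g x"
      then have "g wm < g c" by simp
      then show False using iv_lt[OF X(2), of wm x c] a xc wmX by blast
    }
  qed
qed

lemma Gather:
  assumes U: "finite U" and H: "\<forall>X\<in>H. X \<subseteq> U" and W: "W \<subseteq> U" and C: "C1P U H"
    and nov: "\<forall>X\<in>H. \<not> overlap X W"
  shows "C1P U (insert W H)"
proof (cases "W = {}")
  case True
  obtain g :: "'a \<Rightarrow> int" where g: "inj_on g U" "\<forall>X\<in>H. iv g U X" using C1P_int[OF C] by blast
  have "iv g U W" using True unfolding iv_def by blast
  then show ?thesis using C1P_I[OF U g(1), of "insert W H"] g(2) H W by blast
next
  case False
  obtain g :: "'a \<Rightarrow> int" where g: "inj_on g U" "\<forall>X\<in>H. iv g U X" using C1P_int[OF C] by blast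
  obtain wm where wm: "wm \<in> W" "\<forall>w\<in>W. g wm \<le> g w" using ex_min[OF finite_subset[OF W U] False, of g] by blast
  define ord where "ord = ins g W (2 * g wm + 1) g (0::int)"
  have inj: "inj_on ord U" unfolding ord_def
    by (rule ins_inj[OF g(1)]) (use g(1) W in \<open>auto intro: inj_on_subset\<close>)
  have ivW: "iv ord U W" unfolding ord_def by (rule ins_I2) (auto simp: iv_def)
  have "iv ord U X" if "X \<in> H" for X
  proof -
    have X: "X \<subseteq> U" "iv g U X" using that H g by auto
    have "X \<inter> W = {} \<or> W \<subseteq> X \<or> X \<subseteq> W" using nov that unfolding overlap_def by blast
    then show ?thesis
    proof (elim disjE)
      assume "X \<inter> W = {}" then show ?thesis unfolding ord_def using gather_disj[OF g(1) wm(1) W X] by blast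
    next
      assume "W \<subseteq> X" then show ?thesis unfolding ord_def using gather_sup[OF g(1) wm(1) W X] by blast
    next
      assume "X \<subseteq> W" then show ?thesis unfolding ord_def
        by (rule ins_I2) (use iv_mono[OF X(2)] W in auto)
    qed
  qed
  then show ?thesis using C1P_I[OF U inj, of "insert W H"] ivW H W by blast
qed

lemma side:
  fixes g :: "'c \<Rightarrow> int"
  assumes inj: "inj_on g U" and sub: "W \<subseteq> U" "Z \<subseteq> U" and iv: "iv g U W" "iv g U Z" and ov: "overlap Z W"
  shows "(\<forall>z\<in>Z - W. \<forall>w\<in>W. g z < g w) \<or> (\<forall>z\<in>Z - W. \<forall>w\<in>W. g w < g z)"
proof -
  have one: "(\<forall>w\<in>W. g z < g w) \<or> (\<forall>w\<in>W. g w < g z)" if z: "z \<in> Z - W" for z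
  proof (rule ccontr)
    assume "\<not> ?thesis"
    then obtain w1 w2 where w: "w1 \<in> W" "w2 \<in> W" "g w1 \<le> g z" "g z \<le> g w2" by force
    then have "z \<in> W" using iv(1) z sub unfolding iv_def by blast
    then show False using z by blast
  qed
  show ?thesis
  proof (rule ccontr)
    assume "\<not> ?thesis"
    then obtain z1 z2 w1 w2 where zw: "z1 \<in> Z - W" "z2 \<in> Z - W" "w1 \<in> W" "w2 \<in> W" "\<not> g z1 < g w1" "\<not> g w2 < g z2"
      by blast
    have "\<forall>w\<in>W. g w < g z1" using one[OF zw(1)] zw(3,5) by blast
    moreover have "\<forall>w\<in>W. g z2 < g w" using one[OF zw(2)] zw(4,6) by blast
    ultimately have "W \<subseteq> Z" using iv_lt[OF iv(2), of z2 z1] zw sub by blast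
    then show False using ov unfolding overlap_def by blast
  qed
qed

lemma sub_left:
  fixes g h :: "'c \<Rightarrow> int"
  assumes U: "finite U" and inj: "inj_on g U" and W: "W \<subseteq> U" "W \<noteq> {}" and Z: "Z \<subseteq> U"
    and G: "\<forall>Y\<in>G. Y \<subseteq> U \<and> iv g U Y \<and> (W \<subseteq> Y \<or> Y \<inter> W = {})"
    and F: "\<forall>X\<in>F. X \<subseteq> W \<and> iv h W X" and injh: "inj_on h W"
    and ivZ: "iv g U Z" and ov: "overlap Z W" and left: "\<forall>z\<in>Z - W. \<forall>w\<in>W. g z < g w"
    and hZ: "\<forall>w\<in>Z \<inter> W. \<forall>w'\<in>W - Z. h w < h w'"
  shows "C1P U (insert Z (F \<union> G))"
proof -
  obtain wm where wm: "wm \<in> W" "\<forall>w\<in>W. g wm \<le> g w" using ex_min[OF finite_subset[OF W(1) U] W(2), of g] by blast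
  define ord where "ord = ins g W (2 * g wm + 1) h (0::int)"
  have injo: "inj_on ord U" unfolding ord_def by (rule ins_inj[OF inj injh]) simp
  have ivF: "iv ord U X" if "X \<in> F" for X
    unfolding ord_def by (rule ins_I2) (use F that in auto)
  have ivG: "iv ord U Y" if "Y \<in> G" for Y
  proof -
    have Y: "Y \<subseteq> U" "iv g U Y" "W \<subseteq> Y \<or> Y \<inter> W = {}" using G that by auto
    from Y(3) show ?thesis
    proof
      assume "W \<subseteq> Y" then show ?thesis unfolding ord_def using gather_sup[OF inj wm(1) W(1) Y(1,2)] by blast
    next
      assume "Y \<inter> W = {}" then show ?thesis unfolding ord_def using gather_disj[OF inj wm(1) W(1) Y(1,2)] by blast
    qed
  qed
  obtain w1 where w1: "w1 \<in> Z" "w1 \<in> W" using ov unfolding overlap_def by blast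
  obtain z0 where z0: "z0 \<in> Z" "z0 \<notin> W" using ov unfolding overlap_def by blast
  have wmU: "wm \<in> U" using wm W by blast
  have wmZ: "wm \<in> Z"
  proof -
    have "g z0 < g wm" using left z0 wm(1) by blast
    then have "g z0 \<le> g wm" by simp
    moreover have "g wm \<le> g w1" using wm w1 by blast
    ultimately show ?thesis using ivZ z0 w1 wmU unfolding iv_def by blast
  qed
  have ivZo: "iv ord U Z" unfolding ord_def
  proof (rule ins_I4)
    show "Z \<subseteq> U" "inj_on g U" by fact+
    show "odd (2 * g wm + 1)" by simp
    show "iv g (U - W) Z" using iv_mono[OF ivZ] by blast
    show "\<forall>x\<in>Z - W. 2 * g x < 2 * g wm + 1"
    proof
      fix x assume "x \<in> Z - W"
      then have "g x < g wm" using left wm(1) by blast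
      then show "2 * g x < 2 * g wm + 1" by simp
    qed
    show "\<forall>w\<in>Z \<inter> W. \<forall>w'\<in>W - Z. h w < h w'" by fact
    show "\<forall>x\<in>Z - W. \<forall>c\<in>U - W - Z. \<not> (g x < g c \<and> 2 * g c < 2 * g wm + 1)"
    proof (intro ballI notI)
      fix x c assume xc: "x \<in> Z - W" "c \<in> U - W - Z" "g x < g c \<and> 2 * g c < 2 * g wm + 1"
      then have "g c \<le> g wm" by simp
      moreover have "c \<noteq> wm" using xc wmZ by blast
      ultimately have "g c < g wm" using inj_lt[OF inj, of c wm] xc wmU by blast
      then show False using iv_lt[OF ivZ, of x wm c] xc wmZ by blast
    qed
  qed
  have A1: "\<forall>X\<in>insert Z (F \<union> G). iv ord U X" using ivF ivG ivZo by blast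
  have A2: "\<forall>X\<in>insert Z (F \<union> G). X \<subseteq> U" using F G Z W by blast
  show ?thesis by (rule C1P_I[OF U injo A1 A2])
qed

lemma SUB:
  fixes g f :: "'c \<Rightarrow> int"
  assumes U: "finite U" and inj: "inj_on g U" "inj_on f U" and W: "W \<subseteq> U" and Z: "Z \<subseteq> U"
    and G: "\<forall>Y\<in>G. Y \<subseteq> U \<and> iv g U Y \<and> (W \<subseteq> Y \<or> Y \<inter> W = {})"
    and gWZ: "iv g U W" "iv g U Z"
    and F: "\<forall>X\<in>F. X \<subseteq> W \<and> iv f U X" and fWZ: "iv f U W" "iv f U Z"
  shows "C1P U (insert Z (F \<union> G))"
proof (cases "W = {}")
  case True
  then have "\<forall>X\<in>F. iv g U X" using F unfolding iv_def by blast
  then have A1: "\<forall>X\<in>insert Z (F \<union> G). iv g U X" using G gWZ by blast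
  have A2: "\<forall>X\<in>insert Z (F \<union> G). X \<subseteq> U" using F G Z W by blast
  show ?thesis by (rule C1P_I[OF U inj(1) A1 A2])
next
  case Wne: False
  have injfW: "inj_on f W" using inj(2) W inj_on_subset by blast
  have FW: "\<forall>X\<in>F. X \<subseteq> W \<and> iv f W X" using F iv_mono W by blast
  show ?thesis
  proof (cases "overlap Z W")
    case False
    obtain wm where wm: "wm \<in> W" "\<forall>w\<in>W. g wm \<le> g w" using ex_min[OF finite_subset[OF W U] Wne, of g] by blast
    define ord where "ord = ins g W (2 * g wm + 1) f (0::int)"
    have injo: "inj_on ord U" unfolding ord_def by (rule ins_inj[OF inj(1) injfW]) simp
    have ivF: "iv ord U X" if "X \<in> F" for X
      unfolding ord_def by (rule ins_I2) (use FW that in auto)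
    have ivX: "iv ord U Y" if "Y \<subseteq> U" "iv g U Y" "W \<subseteq> Y \<or> Y \<inter> W = {}" for Y
      using that(3)
    proof
      assume "W \<subseteq> Y" then show ?thesis unfolding ord_def using gather_sup[OF inj(1) wm(1) W that(1,2)] by blast
    next
      assume "Y \<inter> W = {}" then show ?thesis unfolding ord_def using gather_disj[OF inj(1) wm(1) W that(1,2)] by blast
    qed
    have ivG: "iv ord U Y" if "Y \<in> G" for Y using ivX G that by blast
    have ivZo: "iv ord U Z"
    proof (cases "Z \<subseteq> W")
      case True
      show ?thesis unfolding ord_def by (rule ins_I2) (use True iv_mono[OF fWZ(2)] W in auto)
    next
      case False
      then have "W \<subseteq> Z \<or> Z \<inter> W = {}" using \<open>\<not> overlap Z W\<close> unfolding overlap_def by blast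
      then show ?thesis using ivX[OF Z gWZ(2)] by blast
    qed
    have A1: "\<forall>X\<in>insert Z (F \<union> G). iv ord U X" using ivF ivG ivZo by blast
  have A2: "\<forall>X\<in>insert Z (F \<union> G). X \<subseteq> U" using F G Z W by blast
  show ?thesis by (rule C1P_I[OF U injo A1 A2])
  next
    case ov: True
    have hchoice: "\<exists>h::'c\<Rightarrow>int. inj_on h W \<and> (\<forall>X\<in>F. X \<subseteq> W \<and> iv h W X) \<and> (\<forall>w\<in>Z \<inter> W. \<forall>w'\<in>W - Z. h w < h w')"
    proof -
      have ov': "overlap W Z" using ov overlap_sym by blast
      from side[OF inj(2) Z W fWZ(2,1) ov']
      show ?thesis
      proof
        assume a: "\<forall>z\<in>W - Z. \<forall>w\<in>Z. f z < f w"
        have "\<forall>X\<in>F. X \<subseteq> W \<and> iv (\<lambda>c. - f c) W X"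
        proof
          fix X assume "X \<in> F"
          then show "X \<subseteq> W \<and> iv (\<lambda>c. - f c) W X" using FW iv_neg[of f W X] by blast
        qed
        moreover have "\<forall>w\<in>Z \<inter> W. \<forall>w'\<in>W - Z. - f w < - f w'"
        proof (intro ballI)
          fix w w' assume "w \<in> Z \<inter> W" "w' \<in> W - Z"
          then have "f w' < f w" using a by blast
          then show "- f w < - f w'" by simp
        qed
        ultimately show ?thesis using inj_neg[OF injfW] by (intro exI[of _ "\<lambda>c. - f c"] conjI)
      next
        assume a: "\<forall>z\<in>W - Z. \<forall>w\<in>Z. f w < f z"
        have "\<forall>w\<in>Z \<inter> W. \<forall>w'\<in>W - Z. f w < f w'" using a by blast
        then show ?thesis using FW injfW by (intro exI[of _ f] conjI)
      qed
    qed
    then obtain h :: "'c \<Rightarrow> int" where h: "inj_on h W" "\<forall>X\<in>F. X \<subseteq> W \<and> iv h W X"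
      "\<forall>w\<in>Z \<inter> W. \<forall>w'\<in>W - Z. h w < h w'" by blast
    from side[OF inj(1) W Z gWZ ov]
    show ?thesis
    proof
      assume "\<forall>z\<in>Z - W. \<forall>w\<in>W. g z < g w"
      then show ?thesis by (rule sub_left[OF U inj(1) W Wne Z G h(2,1) gWZ(2) ov _ h(3)])
    next
      assume a: "\<forall>z\<in>Z - W. \<forall>w\<in>W. g w < g z"
      have l: "\<forall>z\<in>Z - W. \<forall>w\<in>W. - g z < - g w"
      proof (intro ballI)
        fix z w assume "z \<in> Z - W" "w \<in> W"
        then have "g w < g z" using a by blast
        then show "- g z < - g w" by simp
      qed
      have G': "\<forall>Y\<in>G. Y \<subseteq> U \<and> iv (\<lambda>c. - g c) U Y \<and> (W \<subseteq> Y \<or> Y \<inter> W = {})"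
      proof
        fix Y assume "Y \<in> G"
        then show "Y \<subseteq> U \<and> iv (\<lambda>c. - g c) U Y \<and> (W \<subseteq> Y \<or> Y \<inter> W = {})" using G iv_neg[of g U Y] by blast
      qed
      have Z': "iv (\<lambda>c. - g c) U Z" using gWZ(2) iv_neg[of g U Z] by blast
      show ?thesis by (rule sub_left[OF U inj_neg[OF inj(1)] W Wne Z G' h(2,1) Z' ov l h(3)])
    qed
  qed
qed



lemma two_lt1: "2 * (a::int) < 2 * b + 1 \<longleftrightarrow> a \<le> b" by arith
lemma two_lt2: "2 * (b::int) + 1 < 2 * a \<longleftrightarrow> b < a" by arith

lemma Rcase:
  fixes g :: "'c \<Rightarrow> int"
  assumes U: "finite U" and inj: "inj_on g U" and W: "W \<subseteq> U" and Z: "Z \<subseteq> U"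
    and G: "\<forall>Y\<in>G. Y \<subseteq> U \<and> iv g U Y" and ivZ: "iv g U Z"
    and zs: "zs \<in> Z - W" and zmax: "\<forall>z\<in>Z - W. g z \<le> g zs"
    and C1: "\<forall>Y\<in>G. Y \<inter> W = {} \<longrightarrow> (\<forall>x\<in>Y. \<forall>y\<in>Y. \<not> (g x \<le> g zs \<and> g zs < g y))"
    and C2: "\<forall>Y\<in>G. W \<subseteq> Y \<longrightarrow> (\<forall>x\<in>Y - W. \<forall>c\<in>U - W - Y. \<not> (g x < g c \<and> g c \<le> g zs) \<and> \<not> (g zs < g c \<and> g c < g x))"
    and C3: "\<forall>Y\<in>G. W \<subseteq> Y \<or> Y \<inter> W = {}"
  shows "C1P U (insert W (insert Z G))"
proof -
  define h where "h c = (if c \<in> Z then 0 else 1::int, g c)" for c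
  define ord where "ord = ins g W (2 * g zs + 1) h (0::int, 0::int)"
  have injh: "inj_on h W"
  proof (rule inj_onI)
    fix c c' assume "c \<in> W" "c' \<in> W" "h c = h c'"
    then have "g c = g c'" unfolding h_def by simp
    then show "c = c'" using inj W \<open>c \<in> W\<close> \<open>c' \<in> W\<close> unfolding inj_on_def by blast
  qed
  have injo: "inj_on ord U" unfolding ord_def by (rule ins_inj[OF inj injh]) simp
  have ivW: "iv ord U W" unfolding ord_def by (rule ins_I2) (auto simp: iv_def)
  have ivZo: "iv ord U Z" unfolding ord_def
  proof (rule ins_I4)
    show "Z \<subseteq> U" "inj_on g U" by fact+
    show "odd (2 * g zs + 1)" by simp
    show "iv g (U - W) Z" using iv_mono[OF ivZ] by blast
    show "\<forall>x\<in>Z - W. 2 * g x < 2 * g zs + 1" using zmax two_lt1 by blast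
    show "\<forall>w\<in>Z \<inter> W. \<forall>w'\<in>W - Z. h w < h w'" unfolding h_def by simp
    show "\<forall>x\<in>Z - W. \<forall>c\<in>U - W - Z. \<not> (g x < g c \<and> 2 * g c < 2 * g zs + 1)"
    proof (intro ballI notI)
      fix x c assume xc: "x \<in> Z - W" "c \<in> U - W - Z" "g x < g c \<and> 2 * g c < 2 * g zs + 1"
      then have "g x \<le> g c" "g c \<le> g zs" using two_lt1 by auto
      then have "c \<in> Z" using ivZ xc zs unfolding iv_def by blast
      then show False using xc by blast
    qed
  qed
  have ivG: "iv ord U Y" if Y: "Y \<in> G" for Y
  proof -
    have Y': "Y \<subseteq> U" "iv g U Y" using G Y by auto
    from C3 Y have "W \<subseteq> Y \<or> Y \<inter> W = {}" by blast
    then show ?thesis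
    proof
      assume WY: "W \<subseteq> Y"
      show ?thesis unfolding ord_def
      proof (rule ins_I3)
        show "W \<subseteq> Y" "Y \<subseteq> U" "inj_on g U" by fact+
        show "odd (2 * g zs + 1)" by simp
        show "iv g (U - W) Y" using iv_mono[OF Y'(2)] by blast
        show "\<forall>x\<in>Y - W. \<forall>c\<in>U - W - Y. \<not> (g x < g c \<and> 2 * g c < 2 * g zs + 1) \<and> \<not> (2 * g zs + 1 < 2 * g c \<and> g c < g x)"
          using C2 Y WY unfolding two_lt1 two_lt2 by blast
      qed
    next
      assume YW: "Y \<inter> W = {}"
      show ?thesis unfolding ord_def
      proof (rule ins_I1)
        show "Y \<inter> W = {}" by fact
        show "odd (2 * g zs + 1)" by simp
        show "iv g (U - W) Y" using iv_mono[OF Y'(2)] by blast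
        show "\<not> (\<exists>x\<in>Y. \<exists>y\<in>Y. 2 * g x < 2 * g zs + 1 \<and> 2 * g zs + 1 < 2 * g y)"
          using C1 Y YW unfolding two_lt1 two_lt2 by blast
      qed
    qed
  qed
  have A1: "\<forall>X\<in>insert W (insert Z G). iv ord U X" using ivW ivZo ivG by blast
  have A2: "\<forall>X\<in>insert W (insert Z G). X \<subseteq> U" using G Z W by blast
  show ?thesis by (rule C1P_I[OF U injo A1 A2])
qed

lemma pos_w1:
  fixes g :: "'c \<Rightarrow> int"
  assumes inj: "inj_on g U" and Y: "Y \<subseteq> U" "iv g U Y" "Y \<inter> W = {}" and Z: "Z \<subseteq> U" "iv g U Z"
    and zs: "zs \<in> Z - W" and zmax: "\<forall>z\<in>Z - W. g z \<le> g zs" and w1: "w1 \<in> Z" "w1 \<in> W"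
    and xy: "x \<in> Y" "y \<in> Y" "g x \<le> g zs" "g zs < g y"
  shows "g w1 < g x"
proof (rule ccontr)
  assume "\<not> g w1 < g x"
  then have "g x \<le> g w1" by simp
  moreover have "x \<noteq> w1" "y \<noteq> w1" using xy w1 Y(3) by auto
  moreover have U': "x \<in> U" "y \<in> U" "w1 \<in> U" "zs \<in> U" using xy Y w1 Z zs by auto
  ultimately have xw: "g x < g w1" using inj_lt[OF inj] by blast
  show False
  proof (cases "g w1 < g y")
    case True
    then have "w1 \<in> Y" using iv_lt[OF Y(2), of x y w1] xw xy U' by blast
    then show False using w1 Y(3) by blast
  next
    case False
    then have "g y < g w1" using inj_lt[OF inj, of y w1] U' \<open>y \<noteq> w1\<close> by simp
    then have "y \<in> Z" using iv_lt[OF Z(2), of zs w1 y] zs w1 xy U' by blast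
    moreover have "y \<notin> W" using xy Y(3) by blast
    ultimately have "g y \<le> g zs" using zmax by blast
    then show False using xy by simp
  qed
qed

lemma plus_cond:
  fixes g :: "'c \<Rightarrow> int"
  assumes inj: "inj_on g U" and Y: "Y \<subseteq> U" "iv g U Y" "W \<subseteq> Y" and Z: "Z \<subseteq> U" "iv g U Z"
    and zs: "zs \<in> Z - W" and zmax: "\<forall>z\<in>Z - W. g z \<le> g zs" and w1: "w1 \<in> Z" "w1 \<in> W"
    and w0: "w0 \<in> W" "\<forall>z\<in>Z. g z < g w0"
  shows "\<forall>x\<in>Y - W. \<forall>c\<in>U - W - Y. \<not> (g x < g c \<and> g c \<le> g zs) \<and> \<not> (g zs < g c \<and> g c < g x)"
proof (intro ballI conjI notI)
  fix x c assume xc: "x \<in> Y - W" "c \<in> U - W - Y"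
  have w0Y: "w0 \<in> Y" "w1 \<in> Y" using w0 w1 Y(3) by auto
  {
    assume a: "g x < g c \<and> g c \<le> g zs"
    have "g zs < g w0" using w0 zs by blast
    then have "g c < g w0" using a by simp
    then have "c \<in> Y" using iv_lt[OF Y(2), of x w0 c] a xc w0Y by blast
    then show False using xc by blast
  next
    assume a: "g zs < g c \<and> g c < g x"
    have cZ: "c \<notin> Z"
    proof
      assume "c \<in> Z" then have "g c \<le> g zs" using zmax xc by blast
      then show False using a by simp
    qed
    have "g w1 < g c"
    proof (rule ccontr)
      assume "\<not> g w1 < g c"
      then have "g c \<le> g w1" by simp
      moreover have "c \<noteq> w1" "c \<in> U" "w1 \<in> U" using xc w1 Z by auto
      ultimately have "g c < g w1" using inj_lt[OF inj] by blast
      then have "c \<in> Z" using iv_lt[OF Z(2), of zs w1 c] a zs w1 xc by blast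
      then show False using cZ by blast
    qed
    then have "c \<in> Y" using iv_lt[OF Y(2), of w1 x c] a xc w0Y by blast
    then show False using xc by blast
  }
qed

lemma pocket:
  fixes g :: "'c \<Rightarrow> int"
  assumes conn: "conn G" and G: "\<forall>Y\<in>G. Y \<subseteq> U \<and> iv g U Y" and C3: "\<forall>Y\<in>G. W \<subseteq> Y \<or> Y \<inter> W = {}"
    and Y0: "Y0 \<in> G" "W \<subseteq> Y0" and inj: "inj_on g U" and W: "W \<subseteq> U" and Z: "Z \<subseteq> U" "iv g U Z"
    and zs: "zs \<in> Z - W" and zmax: "\<forall>z\<in>Z - W. g z \<le> g zs" and w1: "w1 \<in> Z" "w1 \<in> W"
    and w0: "w0 \<in> W" "\<forall>z\<in>Z. g z < g w0"
    and Y: "Y \<in> G" "Y \<inter> W = {}" and xy: "x \<in> Y" "y \<in> Y" "g x \<le> g zs" "g zs < g y"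
  shows False
proof -
  have ivY: "iv g U Y" "Y \<subseteq> U" using G Y by auto
  have w1x: "g w1 < g x" using pos_w1[OF inj ivY(2,1) Y(2) Z zs zmax w1 xy] .
  have U': "w0 \<in> U" "w1 \<in> U" using w0 w1 W by auto
  have yw0: "g y < g w0"
  proof (rule ccontr)
    assume "\<not> g y < g w0"
    then have "g w0 \<le> g y" by simp
    moreover have "w0 \<noteq> y" "y \<in> U" using w0 xy Y ivY by auto
    ultimately have "g w0 < g y" using inj_lt[OF inj] U' by blast
    moreover have "g x < g w0" using xy w0 zs by force
    ultimately have "w0 \<in> Y" using iv_lt[OF ivY(1), of x y w0] xy U' by blast
    then show False using Y w0 by blast
  qed
  define S where "S = {Y'\<in>G. Y' \<inter> W = {} \<and> (\<forall>u\<in>Y'. g w1 < g u \<and> g u < g w0)}"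
  have "S = G"
  proof (rule connD[OF conn, of S Y])
    show "S \<subseteq> G" unfolding S_def by blast
    have "\<forall>u\<in>Y. g w1 < g u \<and> g u < g w0"
    proof (intro ballI conjI)
      fix u assume u: "u \<in> Y"
      have uU: "u \<in> U" "u \<noteq> w1" "u \<noteq> w0" using u ivY Y w1 w0 by auto
      show "g w1 < g u"
      proof (rule ccontr)
        assume "\<not> g w1 < g u"
        then have "g u < g w1" using inj_lt[OF inj, of u w1] uU U' by simp
        then have "w1 \<in> Y" using iv_lt[OF ivY(1), of u x w1] u xy w1x U' by blast
        then show False using Y w1 by blast
      qed
      show "g u < g w0"
      proof (rule ccontr)
        assume "\<not> g u < g w0"
        then have "g w0 < g u" using inj_lt[OF inj, of w0 u] uU U' by simp
        then have "w0 \<in> Y" using iv_lt[OF ivY(1), of y u w0] u xy yw0 U' by blast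
        then show False using Y w0 by blast
      qed
    qed
    then show "Y \<in> S" unfolding S_def using Y by blast
  next
    fix Y'' Y' assume H: "Y'' \<in> S" "Y' \<in> G" "overlap Y'' Y'"
    then obtain v where v: "v \<in> Y''" "v \<in> Y'" unfolding overlap_def by blast
    have Y'': "\<forall>u\<in>Y''. g w1 < g u \<and> g u < g w0" using H(1) unfolding S_def by blast
    have ivY': "iv g U Y'" "Y' \<subseteq> U" using G H(2) by auto
    have Y''U: "Y'' \<subseteq> U" using H(1) G unfolding S_def by blast
    have Y'W: "Y' \<inter> W = {}"
    proof (rule ccontr)
      assume "Y' \<inter> W \<noteq> {}"
      then have "W \<subseteq> Y'" using C3 H(2) by blast
      then have "Y'' \<subseteq> Y'" using iv_lt[OF ivY'(1), of w1 w0] Y'' w1 w0 Y''U by blast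
      then show False using H(3) unfolding overlap_def by blast
    qed
    have "\<forall>u\<in>Y'. g w1 < g u \<and> g u < g w0"
    proof (intro ballI conjI)
      fix u assume u: "u \<in> Y'"
      have uU: "u \<in> U" "u \<noteq> w1" "u \<noteq> w0" using u ivY' Y'W w1 w0 by auto
      have vv: "g w1 < g v" "g v < g w0" using Y'' v by auto
      show "g w1 < g u"
      proof (rule ccontr)
        assume "\<not> g w1 < g u"
        then have "g u < g w1" using inj_lt[OF inj, of u w1] uU U' by simp
        then have "w1 \<in> Y'" using iv_lt[OF ivY'(1), of u v w1] u v vv U' by blast
        then show False using Y'W w1 by blast
      qed
      show "g u < g w0"
      proof (rule ccontr)
        assume "\<not> g u < g w0"
        then have "g w0 < g u" using inj_lt[OF inj, of w0 u] uU U' by simp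
        then have "w0 \<in> Y'" using iv_lt[OF ivY'(1), of v u w0] u v vv U' by blast
        then show False using Y'W w0 by blast
      qed
    qed
    then show "Y' \<in> S" unfolding S_def using H(2) Y'W by blast
  qed
  then have "Y0 \<in> S" using Y0 by blast
  then show False unfolding S_def using Y0 w1 by blast
qed



lemma out_side:
  fixes g :: "'c \<Rightarrow> int"
  assumes "iv g U Z" "w \<in> U" "w \<notin> Z"
  shows "(\<forall>z\<in>Z. g z < g w) \<or> (\<forall>z\<in>Z. g w < g z)"
proof (rule ccontr)
  assume "\<not> ?thesis"
  then obtain z1 z2 where z: "z1 \<in> Z" "z2 \<in> Z" "g w \<le> g z1" "g z2 \<le> g w" by force
  then have "w \<in> Z" using assms unfolding iv_def by blast
  then show False using assms by blast
qed

lemma neg_facts: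
  fixes g :: "'c \<Rightarrow> int"
  assumes "\<forall>Y\<in>G. Y \<subseteq> U \<and> iv g U Y"
  shows "\<forall>Y\<in>G. Y \<subseteq> U \<and> iv (\<lambda>c. - g c) U Y"
proof
  fix Y assume "Y \<in> G"
  then show "Y \<subseteq> U \<and> iv (\<lambda>c. - g c) U Y" using assms iv_neg[of g U Y] by blast
qed

lemma Lstar:
  assumes U: "finite U" and G: "\<forall>Y\<in>G. Y \<subseteq> U" and conn: "conn G" and W: "W \<subseteq> U"
    and C3: "\<forall>Y\<in>G. W \<subseteq> Y \<or> Y \<inter> W = {}" and Z: "Z \<subseteq> U" and C: "C1P U (insert Z G)"
  shows "C1P U (insert W (insert Z G))"
proof (cases "overlap Z W")
  case False
  have "\<forall>X\<in>insert Z G. \<not> overlap X W" using False C3 unfolding overlap_def by blast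
  then show ?thesis using Gather[OF U _ W C] G Z by blast
next
  case ov: True
  obtain g :: "'a \<Rightarrow> int" where g: "inj_on g U" "\<forall>X\<in>insert Z G. iv g U X" using C1P_int[OF C] by blast
  have GG: "\<forall>Y\<in>G. Y \<subseteq> U \<and> iv g U Y" using G g by blast
  have ivZ: "iv g U Z" using g by blast
  have fin: "finite (Z - W)" "Z - W \<noteq> {}" using finite_subset[OF Z U] ov unfolding overlap_def by auto
  obtain zs where zs: "zs \<in> Z - W" "\<forall>z\<in>Z - W. g z \<le> g zs" using ex_max[OF fin, of g] by blast
  obtain zl where zl: "zl \<in> Z - W" "\<forall>z\<in>Z - W. g zl \<le> g z" using ex_min[OF fin, of g] by blast
  have zl': "\<forall>z\<in>Z - W. - g z \<le> - g zl" using zl by auto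
  obtain w1 where w1: "w1 \<in> Z" "w1 \<in> W" using ov unfolding overlap_def by blast
  obtain w0 where w0: "w0 \<in> W" "w0 \<notin> Z" using ov unfolding overlap_def by blast
  have GGn: "\<forall>Y\<in>G. Y \<subseteq> U \<and> iv (\<lambda>c. - g c) U Y" using neg_facts[OF GG] .
  have ivZn: "iv (\<lambda>c. - g c) U Z" using ivZ iv_neg[of g U Z] by blast
  have injn: "inj_on (\<lambda>c. - g c) U" using inj_neg[OF g(1)] .
  show ?thesis
  proof (cases "\<exists>Y0\<in>G. W \<subseteq> Y0")
    case True
    then obtain Y0 where Y0: "Y0 \<in> G" "W \<subseteq> Y0" by blast
    from out_side[OF ivZ, of w0] w0 W
    have "(\<forall>z\<in>Z. g z < g w0) \<or> (\<forall>z\<in>Z. g w0 < g z)" by blast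
    then show ?thesis
    proof
      assume w0r: "\<forall>z\<in>Z. g z < g w0"
      have C1: "\<forall>Y\<in>G. Y \<inter> W = {} \<longrightarrow> (\<forall>x\<in>Y. \<forall>y\<in>Y. \<not> (g x \<le> g zs \<and> g zs < g y))"
        using pocket[OF conn GG C3 Y0 g(1) W Z ivZ zs w1 w0(1) w0r] by blast
      have C2: "\<forall>Y\<in>G. W \<subseteq> Y \<longrightarrow> (\<forall>x\<in>Y - W. \<forall>c\<in>U - W - Y. \<not> (g x < g c \<and> g c \<le> g zs) \<and> \<not> (g zs < g c \<and> g c < g x))"
      proof (rule ballI, rule impI)
        fix Y assume "Y \<in> G" "W \<subseteq> Y"
        then show "\<forall>x\<in>Y - W. \<forall>c\<in>U - W - Y. \<not> (g x < g c \<and> g c \<le> g zs) \<and> \<not> (g zs < g c \<and> g c < g x)"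
          using plus_cond[OF g(1) _ _ _ Z ivZ zs w1 w0(1) w0r] GG by blast
      qed
      show ?thesis by (rule Rcase[OF U g(1) W Z GG ivZ zs C1 C2 C3])
    next
      assume w0l: "\<forall>z\<in>Z. g w0 < g z"
      have w0r: "\<forall>z\<in>Z. - g z < - g w0" using w0l by auto
      have C1: "\<forall>Y\<in>G. Y \<inter> W = {} \<longrightarrow> (\<forall>x\<in>Y. \<forall>y\<in>Y. \<not> (- g x \<le> - g zl \<and> - g zl < - g y))"
        using pocket[OF conn GGn C3 Y0 injn W Z ivZn zl(1) zl' w1 w0(1) w0r] by blast
      have C2: "\<forall>Y\<in>G. W \<subseteq> Y \<longrightarrow> (\<forall>x\<in>Y - W. \<forall>c\<in>U - W - Y. \<not> (- g x < - g c \<and> - g c \<le> - g zl) \<and> \<not> (- g zl < - g c \<and> - g c < - g x))"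
      proof (rule ballI, rule impI)
        fix Y assume "Y \<in> G" "W \<subseteq> Y"
        then show "\<forall>x\<in>Y - W. \<forall>c\<in>U - W - Y. \<not> (- g x < - g c \<and> - g c \<le> - g zl) \<and> \<not> (- g zl < - g c \<and> - g c < - g x)"
          using plus_cond[OF injn _ _ _ Z ivZn zl(1) zl' w1 w0(1) w0r] GGn by blast
      qed
      show ?thesis by (rule Rcase[OF U injn W Z GGn ivZn zl(1) zl' C1 C2 C3])
    qed
  next
    case False
    have C2: "\<forall>Y\<in>G. W \<subseteq> Y \<longrightarrow> P Y" for P using False by blast
    show ?thesis
    proof (cases "\<forall>Y\<in>G. Y \<inter> W = {} \<longrightarrow> (\<forall>x\<in>Y. \<forall>y\<in>Y. \<not> (g x \<le> g zs \<and> g zs < g y))")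
      case True
      show ?thesis by (rule Rcase[OF U g(1) W Z GG ivZ zs True C2 C3])
    next
      case bl1: False
      show ?thesis
      proof (cases "\<forall>Y\<in>G. Y \<inter> W = {} \<longrightarrow> (\<forall>x\<in>Y. \<forall>y\<in>Y. \<not> (- g x \<le> - g zl \<and> - g zl < - g y))")
        case True
        show ?thesis by (rule Rcase[OF U injn W Z GGn ivZn zl(1) zl' True C2 C3])
      next
        case bl2: False
        obtain Y1 x1 y1 where b1: "Y1 \<in> G" "Y1 \<inter> W = {}" "x1 \<in> Y1" "y1 \<in> Y1" "g x1 \<le> g zs" "g zs < g y1"
          using bl1 by blast
        obtain Y2 x2 y2 where b2: "Y2 \<in> G" "Y2 \<inter> W = {}" "x2 \<in> Y2" "y2 \<in> Y2" "- g x2 \<le> - g zl" "- g zl < - g y2"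
          using bl2 by blast
        have Y1: "Y1 \<subseteq> U" "iv g U Y1" using GG b1 by auto
        have Y2: "Y2 \<subseteq> U" "iv (\<lambda>c. - g c) U Y2" using GGn b2 by auto
        have a1: "g w1 < g x1" using pos_w1[OF g(1) Y1 b1(2) Z ivZ zs w1 b1(3-6)] .
        have a2: "- g w1 < - g x2" using pos_w1[OF injn Y2 b2(2) Z ivZn zl(1) zl' w1 b2(3-6)] .
        have ivU: "iv g U (\<Union>G)" using union_iv[OF conn] GG by blast
        have "w1 \<in> \<Union>G" using iv_lt[OF ivU, of x2 x1 w1] a1 a2 b1 b2 w1 W by auto
        then obtain Y where "Y \<in> G" "w1 \<in> Y" by blast
        then have "W \<subseteq> Y" using C3 w1 by blast
        then show ?thesis using False \<open>Y \<in> G\<close> by blast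
      qed
    qed
  qed
qed



lemma GLone:
  assumes U: "finite U" and F: "\<forall>X\<in>F. X \<subseteq> U" and G: "\<forall>Y\<in>G. Y \<subseteq> U" and cF: "conn F" and cG: "conn G"
    and Z: "Z \<subseteq> U" and C3: "\<forall>Y\<in>G. \<Union>F \<subseteq> Y \<or> Y \<inter> \<Union>F = {}"
    and CF: "C1P U (insert Z F)" and CG: "C1P U (insert Z G)"
  shows "C1P U (insert Z (F \<union> G))"
proof -
  have W: "\<Union>F \<subseteq> U" using F by blast
  have L: "C1P U (insert (\<Union>F) (insert Z G))" by (rule Lstar[OF U G cG W C3 Z CG])
  obtain g :: "'a \<Rightarrow> int" where g: "inj_on g U" "\<forall>X\<in>insert (\<Union>F) (insert Z G). iv g U X" using C1P_int[OF L] by blast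
  obtain f :: "'a \<Rightarrow> int" where f: "inj_on f U" "\<forall>X\<in>insert Z F. iv f U X" using C1P_int[OF CF] by blast
  have fW: "iv f U (\<Union>F)" using union_iv[OF cF] f(2) by blast
  have G': "\<forall>Y\<in>G. Y \<subseteq> U \<and> iv g U Y \<and> (\<Union>F \<subseteq> Y \<or> Y \<inter> \<Union>F = {})" using G g(2) C3 by blast
  have F': "\<forall>X\<in>F. X \<subseteq> \<Union>F \<and> iv f U X" using f(2) by blast
  have gWZ: "iv g U (\<Union>F)" "iv g U Z" using g(2) by auto
  have fZ: "iv f U Z" using f(2) by blast
  show ?thesis by (rule SUB[OF U g(1) f(1) W Z G' gWZ F' fW fZ])
qed

lemma inside_all:
  assumes cG: "conn G" and nov: "\<forall>Y\<in>G. \<not> overlap Y V" and Y0: "Y0 \<in> G" "Y0 \<subseteq> V"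
  shows "\<Union>G \<subseteq> V"
proof -
  have "{Y\<in>G. Y \<subseteq> V} = G"
  proof (rule connD[OF cG, of _ Y0])
    fix Y Y' assume H: "Y \<in> {Y \<in> G. Y \<subseteq> V}" "Y' \<in> G" "overlap Y Y'"
    then have "\<not> overlap Y' V" using nov by blast
    then show "Y' \<in> {Y \<in> G. Y \<subseteq> V}" using H unfolding overlap_def by blast
  qed (use Y0 in auto)
  then show ?thesis by blast
qed

lemma half:
  assumes cF: "conn F" and cG: "conn G" and M: "M \<in> F" "finite M" "M \<noteq> {}"
    and card: "\<forall>Y\<in>G. card Y \<le> card M" and finG: "\<forall>Y\<in>G. finite Y"
    and nov: "\<forall>Y\<in>G. \<not> overlap M Y" and sub: "\<Union>F \<subseteq> \<Union>G" and X0: "X0 \<in> F"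
  shows "\<Union>G \<subseteq> X0"
proof -
  have dich: "Y \<subseteq> M \<or> Y \<inter> M = {}" if "Y \<in> G" for Y
  proof -
    have "Y \<subseteq> M \<or> M \<subseteq> Y \<or> Y \<inter> M = {}" using nov that unfolding overlap_def by blast
    moreover have "Y = M" if MY: "M \<subseteq> Y"
    proof -
      have fY: "finite Y" using finG \<open>Y \<in> G\<close> by blast
      have "card M \<le> card Y" using card_mono[OF fY MY] .
      moreover have "card Y \<le> card M" using card \<open>Y \<in> G\<close> by blast
      ultimately have "card M = card Y" by simp
      then show ?thesis using card_subset_eq[OF fY MY] by simp
    qed
    ultimately show ?thesis by blast
  qed
  obtain m where m: "m \<in> M" using M by blast
  then obtain Y1 where Y1: "Y1 \<in> G" "m \<in> Y1" using M sub by blast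
  then have Y1M: "Y1 \<subseteq> M" using dich m by blast
  have "{Y\<in>G. Y \<subseteq> M} = G"
  proof (rule connD[OF cG, of _ Y1])
    fix Y Y' assume H: "Y \<in> {Y \<in> G. Y \<subseteq> M}" "Y' \<in> G" "overlap Y Y'"
    then have "Y' \<inter> M \<noteq> {}" unfolding overlap_def by blast
    then show "Y' \<in> {Y \<in> G. Y \<subseteq> M}" using dich H by blast
  qed (use Y1 Y1M in auto)
  then have GM: "\<Union>G \<subseteq> M" by blast
  have "{M} = F"
  proof (rule connD[OF cF, of _ M])
    fix X Y assume H: "X \<in> {M}" "Y \<in> F" "overlap X Y"
    then have "Y \<subseteq> M" using sub GM by blast
    then show "Y \<in> {M}" using H unfolding overlap_def by blast
  qed (use M in auto)
  then show ?thesis using X0 GM by blast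
qed

lemma Klemma:
  assumes U: "finite U" and F: "\<forall>X\<in>F. X \<subseteq> U" and G: "\<forall>Y\<in>G. Y \<subseteq> U" and cF: "conn F" and cG: "conn G"
    and nov: "\<forall>X\<in>F. \<forall>Y\<in>G. \<not> overlap X Y"
  shows "(\<forall>Y\<in>G. \<Union>F \<subseteq> Y \<or> Y \<inter> \<Union>F = {}) \<or> (\<forall>X\<in>F. \<Union>G \<subseteq> X \<or> X \<inter> \<Union>G = {})"
proof (rule ccontr)
  assume H: "\<not> ?thesis"
  have "\<not> (\<forall>Y\<in>G. \<Union>F \<subseteq> Y \<or> Y \<inter> \<Union>F = {})" using H unfolding de_Morgan_disj by (rule conjunct1)
  then obtain Y0 where Y0a: "Y0 \<in> G" "\<not> (\<Union>F \<subseteq> Y0 \<or> Y0 \<inter> \<Union>F = {})" by blast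
  then have Y0: "Y0 \<in> G" "\<not> \<Union>F \<subseteq> Y0" "Y0 \<inter> \<Union>F \<noteq> {}" unfolding de_Morgan_disj by auto
  have "\<not> (\<forall>X\<in>F. \<Union>G \<subseteq> X \<or> X \<inter> \<Union>G = {})" using H unfolding de_Morgan_disj by (rule conjunct2)
  then obtain X0 where X0a: "X0 \<in> F" "\<not> (\<Union>G \<subseteq> X0 \<or> X0 \<inter> \<Union>G = {})" by blast
  then have X0: "X0 \<in> F" "\<not> \<Union>G \<subseteq> X0" "X0 \<inter> \<Union>G \<noteq> {}" unfolding de_Morgan_disj by auto
  have novG: "\<forall>Y\<in>G. \<not> overlap Y (\<Union>F)"
  proof
    fix Y assume Y: "Y \<in> G"
    have "\<forall>X\<in>F. \<not> overlap Y X"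
    proof
      fix X assume "X \<in> F" then have "\<not> overlap X Y" using nov Y by blast
      then show "\<not> overlap Y X" using overlap_sym[of X Y] by simp
    qed
    then show "\<not> overlap Y (\<Union>F)" by (rule no_overlap_union[OF cF])
  qed
  have novF: "\<forall>X\<in>F. \<not> overlap X (\<Union>G)"
  proof
    fix X assume "X \<in> F"
    then have "\<forall>Y\<in>G. \<not> overlap X Y" using nov by blast
    then show "\<not> overlap X (\<Union>G)" by (rule no_overlap_union[OF cG])
  qed
  have "\<not> overlap Y0 (\<Union>F)" using novG Y0(1) by blast
  then have "Y0 \<subseteq> \<Union>F" using Y0(2,3) unfolding overlap_def by simp
  then have GF: "\<Union>G \<subseteq> \<Union>F" by (rule inside_all[OF cG novG Y0(1)])
  have "\<not> overlap X0 (\<Union>G)" using novF X0(1) by blast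
  then have "X0 \<subseteq> \<Union>G" using X0(2,3) unfolding overlap_def by simp
  then have FG: "\<Union>F \<subseteq> \<Union>G" by (rule inside_all[OF cF novF X0(1)])
  have "F \<union> G \<subseteq> Pow U" using F G by blast
  moreover have "finite (Pow U)" using U by simp
  ultimately have finFG: "finite (F \<union> G)" by (rule finite_subset)
  have neFG: "F \<union> G \<noteq> {}" using Y0(1) by blast
  obtain M where M: "M \<in> F \<union> G" "\<forall>X\<in>F \<union> G. int (card X) \<le> int (card M)"
    using ex_max[OF finFG neFG, of "\<lambda>X. int (card X)"] by blast
  have cardM: "\<forall>X\<in>F \<union> G. card X \<le> card M" using M(2) by simp
  have finall: "\<forall>X\<in>F \<union> G. finite X"
  proof
    fix X assume "X \<in> F \<union> G" then have "X \<subseteq> U" using F G by blast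
    then show "finite X" using U by (simp add: finite_subset)
  qed
  have "Y0 \<noteq> {}" using Y0(3) by blast
  moreover have "finite Y0" using finall Y0(1) by blast
  ultimately have "card Y0 > 0" by (simp add: card_gt_0_iff)
  moreover have "card Y0 \<le> card M" using cardM Y0(1) by blast
  ultimately have "card M > 0" by simp
  then have Mne: "M \<noteq> {}" by auto
  have finM: "finite M" using finall M(1) by blast
  from M(1) show False
  proof
    assume MF: "M \<in> F"
    have c1: "\<forall>Y\<in>G. card Y \<le> card M" using cardM by blast
    have c2: "\<forall>Y\<in>G. finite Y" using finall by blast
    have c3: "\<forall>Y\<in>G. \<not> overlap M Y" using nov MF by blast
    have "\<Union>G \<subseteq> X0" by (rule half[OF cF cG MF finM Mne c1 c2 c3 FG X0(1)])
    then show False using X0(2) by blast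
  next
    assume MG: "M \<in> G"
    have c1: "\<forall>Y\<in>F. card Y \<le> card M" using cardM by blast
    have c2: "\<forall>Y\<in>F. finite Y" using finall by blast
    have c3: "\<forall>X\<in>F. \<not> overlap M X"
    proof
      fix X assume "X \<in> F" then have "\<not> overlap X M" using nov MG by blast
      then show "\<not> overlap M X" using overlap_sym[of X M] by simp
    qed
    have "\<Union>F \<subseteq> Y0" by (rule half[OF cG cF MG finM Mne c1 c2 c3 GF Y0(1)])
    then show False using Y0(2) by blast
  qed
qed

lemma GL:
  assumes U: "finite U" and F: "\<forall>X\<in>F. X \<subseteq> U" and G: "\<forall>Y\<in>G. Y \<subseteq> U" and cF: "conn F" and cG: "conn G"
    and nov: "\<forall>X\<in>F. \<forall>Y\<in>G. \<not> overlap X Y" and Z: "Z \<subseteq> U"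
    and CF: "C1P U (insert Z F)" and CG: "C1P U (insert Z G)"
  shows "C1P U (insert Z (F \<union> G))"
  using Klemma[OF U F G cF cG nov]
proof
  assume "\<forall>Y\<in>G. \<Union>F \<subseteq> Y \<or> Y \<inter> \<Union>F = {}"
  then show ?thesis by (rule GLone[OF U F G cF cG Z _ CF CG])
next
  assume "\<forall>X\<in>F. \<Union>G \<subseteq> X \<or> X \<inter> \<Union>G = {}"
  then have "C1P U (insert Z (G \<union> F))" by (rule GLone[OF U G F cG cF Z _ CG CF])
  then show ?thesis by (simp add: Un_commute)
qed



lemma single_C1P:
  assumes U: "finite U" and Z: "Z \<subseteq> U"
  shows "C1P U {Z}"
proof -
  obtain f :: "'a \<Rightarrow> nat" and n where f: "f ` U = {i. i < n}" "inj_on f U"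
    using finite_imp_inj_to_nat_seg[OF U] by blast
  define ord where "ord c = (if c \<in> Z then 0 else 1::int, int (f c))" for c
  have inj: "inj_on ord U"
  proof (rule inj_onI)
    fix x y assume "x \<in> U" "y \<in> U" "ord x = ord y"
    then have "f x = f y" unfolding ord_def by simp
    then show "x = y" using f(2) \<open>x \<in> U\<close> \<open>y \<in> U\<close> unfolding inj_on_def by blast
  qed
  have "iv ord U Z" unfolding iv_def
  proof (intro ballI impI)
    fix x y c assume H: "x \<in> Z" "y \<in> Z" "c \<in> U" "ord x \<le> ord c \<and> ord c \<le> ord y"
    show "c \<in> Z"
    proof (rule ccontr)
      assume "c \<notin> Z"
      then have "ord c \<le> ord y \<longleftrightarrow> False" using H(2) unfolding ord_def by simp
      then show False using H(4) by blast
    qed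
  qed
  then show ?thesis using C1P_I[OF U inj, of "{Z}"] Z by blast
qed

lemma path_conn:
  fixes R :: "nat \<Rightarrow> 'c set"
  assumes ov: "\<forall>c. a \<le> c \<and> c < b \<longrightarrow> overlap (R c) (R (c + 1))"
  shows "conn (R ` {a..b})"
  unfolding conn_def
proof (intro allI impI)
  fix S assume S: "S \<subseteq> R ` {a..b}" "S \<noteq> {}" "\<forall>X\<in>S. \<forall>Y\<in>R ` {a..b}. overlap X Y \<longrightarrow> Y \<in> S"
  obtain c0 where c0: "c0 \<in> {a..b}" "R c0 \<in> S" using S(1,2) by blast
  have up: "c0 + n \<le> b \<longrightarrow> R (c0 + n) \<in> S" for n
  proof (induction n)
    case 0 then show ?case using c0 by simp
  next
    case (Suc n)
    show ?case
    proof
      assume "c0 + Suc n \<le> b"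
      then have "R (c0 + n) \<in> S" using Suc by simp
      moreover have "overlap (R (c0 + n)) (R (c0 + n + 1))" using ov c0 \<open>c0 + Suc n \<le> b\<close> by simp
      moreover have "c0 + n + 1 \<in> {a..b}" using c0 \<open>c0 + Suc n \<le> b\<close> by auto
      then have "R (c0 + n + 1) \<in> R ` {a..b}" by blast
      ultimately have "R (c0 + n + 1) \<in> S" using S(3) by blast
      then show "R (c0 + Suc n) \<in> S" by simp
    qed
  qed
  have down: "a + n \<le> c0 \<longrightarrow> R (c0 - n) \<in> S" for n
  proof (induction n)
    case 0 then show ?case using c0 by simp
  next
    case (Suc n)
    show ?case
    proof
      assume A: "a + Suc n \<le> c0"
      then have "R (c0 - n) \<in> S" using Suc by simp
      moreover have "a \<le> c0 - Suc n \<and> c0 - Suc n < b" using c0 A by auto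
      then have "overlap (R (c0 - Suc n)) (R (c0 - Suc n + 1))" using ov by blast
      moreover have "c0 - Suc n + 1 = c0 - n" using A by simp
      ultimately have "overlap (R (c0 - n)) (R (c0 - Suc n))" using overlap_sym by metis
      moreover have "c0 - Suc n \<in> {a..b}" using c0 A by auto
      then have "R (c0 - Suc n) \<in> R ` {a..b}" by blast
      ultimately show "R (c0 - Suc n) \<in> S" using S(3) \<open>R (c0 - n) \<in> S\<close> by blast
    qed
  qed
  have "R d \<in> S" if "d \<in> {a..b}" for d
  proof (cases "c0 \<le> d")
    case True
    then show ?thesis using up[of "d - c0"] that by simp
  next
    case False
    then show ?thesis using down[of "c0 - d"] that c0 by simp
  qed
  then show "S = R ` {a..b}" using S(1) by blast
qed



lemma C1P_mono': "B \<subseteq> A \<Longrightarrow> C1P U A \<Longrightarrow> C1P U B"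
  by (rule C1P_mono)

theorem mainTheorem6:
  fixes U :: "'c set" and R :: "nat \<Rightarrow> 'c set" and Z :: "'c set"
    and k i j :: nat
  assumes "finite U"
    and "\<forall>a\<in>{1..k}. R a \<subseteq> U" and "Z \<subseteq> U"
    and "inj_on R {1..k}"
    and "\<forall>a\<in>{1..k}. \<forall>b\<in>{1..k}. overlap (R a) (R b) \<longleftrightarrow> (a = b + 1 \<or> b = a + 1)"
    and "C1P U (R ` {1..k})"
    and "\<not> C1P U (R ` {1..k} \<union> {Z})"
    and "\<forall>S C. tucker_sub U (R ` {1..k} \<union> {Z}) S C \<longrightarrow> card S \<ge> 5"
    and "j = (LEAST j. \<not> C1P U (R ` {1..j} \<union> {Z}))"
    and "i = (GREATEST i. 1 \<le> i \<and> i \<le> j \<and> \<not> C1P U (R ` {i..j} \<union> {Z}))"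
  shows "\<not> C1P U (R ` {i..j} \<union> {Z}) \<and>
         (\<forall>T. T \<subset> R ` {i..j} \<union> {Z} \<longrightarrow> C1P U T)"
proof -
  note U = assms(1) and RU = assms(2) and ZU = assms(3) and inj = assms(4) and ov = assms(5)
    and Call = assms(6) and nC = assms(7) and jdef = assms(9) and idef = assms(10)
  have jP: "\<not> C1P U (R ` {1..j} \<union> {Z})" unfolding jdef by (rule LeastI[of _ k]) (rule nC)
  have jk: "j \<le> k" unfolding jdef by (rule Least_le) (rule nC)
  have jmin: "C1P U (R ` {1..j'} \<union> {Z})" if "j' < j" for j'
    using not_less_Least[of j' "\<lambda>j. \<not> C1P U (R ` {1..j} \<union> {Z})"] that jdef by blast
  have j1: "1 \<le> j"
  proof (rule ccontr)
    assume "\<not> 1 \<le> j"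
    then have "j = 0" by simp
    then have eq: "R ` {1..j} \<union> {Z} = {Z}" by simp
    have "\<not> C1P U {Z}" using jP unfolding eq .
    then show False using single_C1P[OF U ZU] by blast
  qed
  define P where "P i' \<longleftrightarrow> 1 \<le> i' \<and> i' \<le> j \<and> \<not> C1P U (R ` {i'..j} \<union> {Z})" for i'
  have P1: "P 1" unfolding P_def using j1 jP by simp
  have Pb: "\<And>y. P y \<Longrightarrow> y \<le> j" unfolding P_def by simp
  have iP: "P i" unfolding idef using GreatestI_nat[of P 1 j, OF P1 Pb] unfolding P_def by simp
  have imax: "i' \<le> i" if "P i'" for i'
    unfolding idef using Greatest_le_nat[of P i' j, OF that Pb] unfolding P_def by simp
  have i1: "1 \<le> i" "i \<le> j" using iP unfolding P_def by auto
  have RUs: "\<forall>X\<in>R ` A. X \<subseteq> U" if "A \<subseteq> {1..k}" for A using RU that by blast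
  have Rne: "R a \<noteq> R b" if "a \<in> {1..k}" "b \<in> {1..k}" "a \<noteq> b" for a b
    using inj that unfolding inj_on_def by blast
  have main: "C1P U ((R ` {i..j} \<union> {Z}) - {x})" if x: "x \<in> R ` {i..j} \<union> {Z}" for x
  proof (cases "x = Z")
    case True
    have "(R ` {i..j} \<union> {Z}) - {x} \<subseteq> R ` {1..k}" using True i1 jk by auto
    then show ?thesis using Call by (rule C1P_mono')
  next
    case xZ: False
    then obtain m where m: "m \<in> {i..j}" "x = R m" using x by blast
    have mk: "m \<in> {1..k}" using m i1 jk by auto
    have sub_except: "(R ` {i..j} \<union> {Z}) - {x} \<subseteq> R ` ({i..j} - {m}) \<union> {Z}"
    proof
      fix y assume "y \<in> (R ` {i..j} \<union> {Z}) - {x}"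
      then show "y \<in> R ` ({i..j} - {m}) \<union> {Z}" using m by auto
    qed
    show ?thesis
    proof (cases "m = j")
      case True
      have "{i..j} - {m} \<subseteq> {1..j - 1}" using True i1 by auto
      then have "R ` ({i..j} - {m}) \<subseteq> R ` {1..j - 1}" by (rule image_mono)
      then have "R ` ({i..j} - {m}) \<union> {Z} \<subseteq> R ` {1..j - 1} \<union> {Z}" by (rule Un_mono[OF _ subset_refl])
      then have "(R ` {i..j} \<union> {Z}) - {x} \<subseteq> R ` {1..j - 1} \<union> {Z}" by (rule subset_trans[OF sub_except])
      moreover have "C1P U (R ` {1..j - 1} \<union> {Z})" using jmin[of "j - 1"] j1 by simp
      ultimately show ?thesis by (rule C1P_mono')
    next
      case mj: False
      have CB: "C1P U (R ` {i + 1..j} \<union> {Z})"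
      proof (rule ccontr)
        assume "\<not> C1P U (R ` {i + 1..j} \<union> {Z})"
        then have "P (i + 1)" unfolding P_def using m mj i1 by auto
        then show False using imax by fastforce
      qed
      show ?thesis
      proof (cases "m = i")
        case True
        have "{i..j} - {m} \<subseteq> {i + 1..j}" using True by auto
        then have "R ` ({i..j} - {m}) \<subseteq> R ` {i + 1..j}" by (rule image_mono)
        then have "R ` ({i..j} - {m}) \<union> {Z} \<subseteq> R ` {i + 1..j} \<union> {Z}" by (rule Un_mono[OF _ subset_refl])
        then have "(R ` {i..j} \<union> {Z}) - {x} \<subseteq> R ` {i + 1..j} \<union> {Z}" by (rule subset_trans[OF sub_except])
        then show ?thesis using CB by (rule C1P_mono')
      next
        case mi: False
        have mrange: "i < m" "m < j" using m mi mj by auto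
        define F where "F = R ` {i..m - 1}"
        define G where "G = R ` {m + 1..j}"
        have "{i..j} - {m} = {i..m - 1} \<union> {m + 1..j}" using mrange by auto
        then have "R ` ({i..j} - {m}) \<union> {Z} = insert Z (F \<union> G)" unfolding F_def G_def by (simp add: image_Un)
        then have sub2: "(R ` {i..j} \<union> {Z}) - {x} \<subseteq> insert Z (F \<union> G)" using sub_except by (simp only:)
        have FU: "\<forall>X\<in>F. X \<subseteq> U" unfolding F_def by (rule RUs) (use i1 jk mrange in auto)
        have GU: "\<forall>X\<in>G. X \<subseteq> U" unfolding G_def by (rule RUs) (use i1 jk mrange in auto)
        have ovs: "overlap (R c) (R (c + 1))" if "c \<in> {1..k}" "c + 1 \<in> {1..k}" for c
          using ov that by auto
        have cF: "conn F" unfolding F_def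
          by (rule path_conn) (use ovs i1 jk mrange in auto)
        have cG: "conn G" unfolding G_def
          by (rule path_conn) (use ovs i1 jk mrange in auto)
        have nov: "\<forall>X\<in>F. \<forall>Y\<in>G. \<not> overlap X Y"
        proof (intro ballI)
          fix X Y assume "X \<in> F" "Y \<in> G"
          then obtain a b where ab: "a \<in> {i..m - 1}" "b \<in> {m + 1..j}" "X = R a" "Y = R b"
            unfolding F_def G_def by blast
          then have "a \<in> {1..k}" "b \<in> {1..k}" "\<not> (a = b + 1 \<or> b = a + 1)" using i1 jk mrange by auto
          then show "\<not> overlap X Y" using ov ab by blast
        qed
        have CF: "C1P U (insert Z F)"
        proof -
          have "{i..m - 1} \<subseteq> {1..j - 1}" using i1 mrange by auto
          then have "F \<subseteq> R ` {1..j - 1}" unfolding F_def by (rule image_mono)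
          then have "insert Z F \<subseteq> insert Z (R ` {1..j - 1})" by (rule insert_mono)
          then have "insert Z F \<subseteq> R ` {1..j - 1} \<union> {Z}" by simp
          moreover have "C1P U (R ` {1..j - 1} \<union> {Z})" using jmin[of "j - 1"] j1 by simp
          ultimately show ?thesis by (rule C1P_mono')
        qed
        have CG: "C1P U (insert Z G)"
        proof -
          have "{m + 1..j} \<subseteq> {i + 1..j}" using mrange by auto
          then have "G \<subseteq> R ` {i + 1..j}" unfolding G_def by (rule image_mono)
          then have "insert Z G \<subseteq> insert Z (R ` {i + 1..j})" by (rule insert_mono)
          then have "insert Z G \<subseteq> R ` {i + 1..j} \<union> {Z}" by simp
          then show ?thesis using CB by (rule C1P_mono')
        qed
        have "C1P U (insert Z (F \<union> G))" by (rule GL[OF U FU GU cF cG nov ZU CF CG])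
        with sub2 show ?thesis by (rule C1P_mono')
      qed
    qed
  qed
  have "\<not> C1P U (R ` {i..j} \<union> {Z})" using iP unfolding P_def by simp
  moreover have "\<forall>T. T \<subset> R ` {i..j} \<union> {Z} \<longrightarrow> C1P U T"
  proof (intro allI impI)
    fix T assume T: "T \<subset> R ` {i..j} \<union> {Z}"
    then obtain x where x: "x \<in> R ` {i..j} \<union> {Z}" "x \<notin> T" by blast
    then have "T \<subseteq> (R ` {i..j} \<union> {Z}) - {x}" using T by blast
    then show "C1P U T" using main[OF x(1)] by (rule C1P_mono')
  qed
  ultimately show ?thesis by blast
qed


end
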